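(* Every element of $\mathcal{R}$ with small support lies in the commutator subgroup $[\mathcal{R},\mathcal{R}]$.
   Context: $\mathcal{R}$ is the group of rational homeomorphisms of $\{0,1\}^\omega$: those $f$ for which there is a finite asynchronous binary transducer $(S,s_0,t,o)$ ($S$ finite, $t\colon S\times\{0,1\}\to S$, $o\colon S\times\{0,1\}\to\{0,1\}^*$) with $f(\psi)=o(s_0,\psi)$, where for $\sigma_1\sigma_2\cdots$ one sets $s_1=s_0$, $s_{n+1}=t(s_n,\sigma_n)$ and $o(s_0,\sigma_1\sigma_2\cdots)=o(s_1,\sigma_1)o(s_2,\sigma_2)\cdots$. An element $f$ has small support if there is a proper nonempty clopen subset $E\subseteq\{0,1\}^\omega$ such that $f$ is the identity on the complement of $E$. *)

theory Defs
  imports "HOL-Analysis.Analysis" "HOL-Algebra.Generated_Groups"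
begin

type_synonym cantor = "nat \<Rightarrow> bool"

definition cantor_top :: "cantor topology" where
  "cantor_top = product_topology (\<lambda>_. discrete_topology (UNIV :: bool set)) UNIV"

text \<open>Asynchronous binary transducer (S, s0, t, o); states are naturals,
  S a finite set of states.  run gives the state sequence: run 0 = s_1 = s0,
  run (Suc n) = t(run n, psi n).\<close>

fun tr_run :: "(nat \<Rightarrow> bool \<Rightarrow> nat) \<Rightarrow> nat \<Rightarrow> cantor \<Rightarrow> nat \<Rightarrow> nat" where
  "tr_run t s0 psi 0 = s0"
| "tr_run t s0 psi (Suc n) = t (tr_run t s0 psi n) (psi n)"

definition tr_out_prefix ::
  "(nat \<Rightarrow> bool \<Rightarrow> nat) \<Rightarrow> (nat \<Rightarrow> bool \<Rightarrow> bool list) \<Rightarrow> nat \<Rightarrow> cantor \<Rightarrow> nat \<Rightarrow> bool list" where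
  "tr_out_prefix t out s0 psi n = concat (map (\<lambda>i. out (tr_run t s0 psi i) (psi i)) [0..<n])"

text \<open>The transducer (S,s0,t,o) computes f: for every input psi, the infinite
  concatenation o(s0,psi) is an infinite word equal to f psi.\<close>
definition transducer_computes ::
  "nat set \<Rightarrow> nat \<Rightarrow> (nat \<Rightarrow> bool \<Rightarrow> nat) \<Rightarrow> (nat \<Rightarrow> bool \<Rightarrow> bool list) \<Rightarrow> (cantor \<Rightarrow> cantor) \<Rightarrow> bool" where
  "transducer_computes S s0 t out f \<longleftrightarrow>
     finite S \<and> s0 \<in> S \<and> (\<forall>s\<in>S. \<forall>b. t s b \<in> S) \<and>
     (\<forall>psi k. \<exists>n. k < length (tr_out_prefix t out s0 psi n) \<and>
                  tr_out_prefix t out s0 psi n ! k = f psi k)"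

definition rational_homeos :: "(cantor \<Rightarrow> cantor) set" where
  "rational_homeos = {f. homeomorphic_map cantor_top cantor_top f \<and>
      (\<exists>S s0 t out. transducer_computes S s0 t out f)}"

definition RG :: "(cantor \<Rightarrow> cantor) monoid" where
  "RG = \<lparr>carrier = rational_homeos, mult = (\<circ>), one = id\<rparr>"

definition clopen_cantor :: "cantor set \<Rightarrow> bool" where
  "clopen_cantor E \<longleftrightarrow> openin cantor_top E \<and> closedin cantor_top E"

definition small_support :: "(cantor \<Rightarrow> cantor) \<Rightarrow> bool" where
  "small_support f \<longleftrightarrow> (\<exists>E. clopen_cantor E \<and> E \<noteq> {} \<and> E \<noteq> UNIV \<and> (\<forall>x. x \<notin> E \<longrightarrow> f x = x))"

end

theory Submission
  imports Defs
begin

definition agree :: "nat \<Rightarrow> cantor \<Rightarrow> cantor \<Rightarrow> bool" where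
  "agree n x y \<longleftrightarrow> (\<forall>i<n. x i = y i)"

definition pcont :: "(cantor \<Rightarrow> cantor) \<Rightarrow> bool" where
  "pcont f \<longleftrightarrow> (\<forall>x k. \<exists>n. \<forall>y. agree n y x \<longrightarrow> agree k (f y) (f x))"

definition ucont :: "(cantor \<Rightarrow> cantor) \<Rightarrow> bool" where
  "ucont f \<longleftrightarrow> (\<forall>k. \<exists>n. \<forall>x y. agree n y x \<longrightarrow> agree k (f y) (f x))"

lemma topspace_cantor [simp]: "topspace cantor_top = UNIV"
  by (simp add: cantor_top_def PiE_def extensional_def)

lemma PiE_UNIV_eq: "Pi\<^sub>E UNIV U = {x. \<forall>i. x i \<in> U i}"
  by (auto simp: PiE_def Pi_def extensional_def)

lemma cyl_eq: "{y. agree n y x} = Pi\<^sub>E UNIV (\<lambda>i. if i < n then {x i} else UNIV)"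
  by (auto simp: PiE_UNIV_eq agree_def)

lemma open_cyl: "openin cantor_top {y. agree n y x}"
proof -
  have "finite {i. (if i < n then {x i} else UNIV) \<noteq> (UNIV::bool set)}"
    by (rule finite_subset[of _ "{..<n}"]) auto
  then show ?thesis unfolding cyl_eq cantor_top_def
    by (subst openin_PiE_gen) auto
qed

lemma open_has_cyl:
  assumes "openin cantor_top S" "x \<in> S"
  shows "\<exists>n. {y. agree n y x} \<subseteq> S"
proof -
  obtain U where U: "finite {i. U i \<noteq> (UNIV::bool set)}" "x \<in> Pi\<^sub>E UNIV U" "Pi\<^sub>E UNIV U \<subseteq> S"
    using assms unfolding cantor_top_def openin_product_topology_alt by fastforce
  obtain n where n: "\<forall>i\<in>{i. U i \<noteq> UNIV}. i < n"
    using U(1) finite_nat_iff_bounded by (metis lessThan_iff subset_eq)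
  have "{y. agree n y x} \<subseteq> Pi\<^sub>E UNIV U"
  proof
    fix y assume "y \<in> {y. agree n y x}"
    then have "\<forall>i<n. y i = x i" by (auto simp: agree_def)
    have "y i \<in> U i" for i
    proof (cases "i < n")
      case True then show ?thesis using U(2) \<open>\<forall>i<n. y i = x i\<close> by (auto simp: PiE_UNIV_eq)
    next
      case False then have "U i = UNIV" using n by (meson mem_Collect_eq)
      then show ?thesis by simp
    qed
    then show "y \<in> Pi\<^sub>E UNIV U" unfolding PiE_UNIV_eq by simp
  qed
  then show ?thesis using U(3) by blast
qed

lemma cont_imp_pcont:
  assumes "continuous_map cantor_top cantor_top f"
  shows "pcont f"
  unfolding pcont_def
proof (intro allI)
  fix x k
  have "openin cantor_top {z. f z \<in> {y. agree k y (f x)}}"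
    using assms open_cyl[of k "f x"] unfolding continuous_map by auto
  moreover have "x \<in> {z. f z \<in> {y. agree k y (f x)}}" by (simp add: agree_def)
  ultimately obtain n where "{y. agree n y x} \<subseteq> {z. f z \<in> {y. agree k y (f x)}}"
    using open_has_cyl by blast
  then show "\<exists>n. \<forall>y. agree n y x \<longrightarrow> agree k (f y) (f x)" by blast
qed

lemma pcont_imp_cont:
  assumes "pcont f"
  shows "continuous_map cantor_top cantor_top f"
proof -
  have "continuous_map cantor_top (discrete_topology UNIV) (\<lambda>x. f x k)" for k
  proof -
    have "openin cantor_top {x. f x k \<in> U}" for U
    proof (subst openin_subopen, intro ballI)
      fix x assume "x \<in> {x. f x k \<in> U}"
      obtain n where "\<forall>y. agree n y x \<longrightarrow> agree (Suc k) (f y) (f x)" using assms pcont_def by blast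
      have "{y. agree n y x} \<subseteq> {x. f x k \<in> U}"
      proof
        fix y assume "y \<in> {y. agree n y x}"
        then have "agree (Suc k) (f y) (f x)" using \<open>\<forall>y. _\<close> by blast
        then have "f y k = f x k" unfolding agree_def by blast
        then show "y \<in> {x. f x k \<in> U}" using \<open>x \<in> _\<close> by simp
      qed
      moreover have "x \<in> {y. agree n y x}" by (simp add: agree_def)
      ultimately show "\<exists>T. openin cantor_top T \<and> x \<in> T \<and> T \<subseteq> {x. f x k \<in> U}"
        using open_cyl[of n x] by blast
    qed
    then show ?thesis unfolding continuous_map by simp
  qed
  then show ?thesis unfolding cantor_top_def by (simp add: continuous_map_componentwise_UNIV)
qed

lemma compact_cantor: "compact_space cantor_top"
  unfolding cantor_top_def by (simp add: compact_space_product_topology compact_space_discrete_topology)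

lemma hausdorff_cantor: "Hausdorff_space cantor_top"
  unfolding cantor_top_def by (simp add: Hausdorff_space_product_topology)

lemma pcont_imp_ucont:
  assumes "pcont f" shows "ucont f"
  unfolding ucont_def
proof
  fix k
  have "\<forall>x. \<exists>n. \<forall>y. agree n y x \<longrightarrow> agree k (f y) (f x)" using assms unfolding pcont_def by blast
  then obtain N where N: "\<forall>x y. agree (N x) y x \<longrightarrow> agree k (f y) (f x)"
    using choice[of "\<lambda>x n. \<forall>y. agree n y x \<longrightarrow> agree k (f y) (f x)"] by blast
  let ?U = "(\<lambda>x. {y. agree (N x) y x}) ` UNIV"
  have op: "\<forall>U\<in>?U. openin cantor_top U" using open_cyl by auto
  have cov: "topspace cantor_top \<subseteq> \<Union>?U" by (auto simp: agree_def)
  have cc: "\<forall>\<U>. (\<forall>U \<in> \<U>. openin cantor_top U) \<and> topspace cantor_top \<subseteq> \<Union>\<U>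
            \<longrightarrow> (\<exists>\<F>. finite \<F> \<and> \<F> \<subseteq> \<U> \<and> topspace cantor_top \<subseteq> \<Union>\<F>)"
    using compact_cantor unfolding compact_space_alt by assumption
  have "(\<forall>U\<in>?U. openin cantor_top U) \<and> topspace cantor_top \<subseteq> \<Union>?U \<longrightarrow> (\<exists>F. finite F \<and> F \<subseteq> ?U \<and> topspace cantor_top \<subseteq> \<Union>F)"
    using cc by blast
  then obtain F where F: "finite F" "F \<subseteq> ?U" "UNIV \<subseteq> \<Union>F"
    using op cov by auto
  obtain X where X: "finite X" "F = (\<lambda>x. {y. agree (N x) y x}) ` X"
    using finite_subset_image[OF F(1) F(2)] by blast
  define M where "M = Max (insert 0 (N ` X))"
  have M: "x \<in> X \<Longrightarrow> N x \<le> M" for x unfolding M_def using X(1) by auto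
  show "\<exists>n. \<forall>x y. agree n y x \<longrightarrow> agree k (f y) (f x)"
  proof (intro exI allI impI)
    fix x y assume a: "agree M y x"
    obtain z where z: "z \<in> X" "agree (N z) x z" using F(3) X(2) by blast
    have "N z \<le> M" using M z by blast
    then have "agree (N z) y z" using a z(2) unfolding agree_def by auto
    then have 1: "agree k (f y) (f z)" using N by blast
    have 2: "agree k (f x) (f z)" using N z(2) by blast
    show "agree k (f y) (f x)" using 1 2 unfolding agree_def by simp
  qed
qed

lemma homeo_iff: "homeomorphic_map cantor_top cantor_top f \<longleftrightarrow> bij f \<and> pcont f"
proof
  assume h: "homeomorphic_map cantor_top cantor_top f"
  have "inj f" using homeomorphic_imp_injective_map[OF h] by simp
  moreover have "surj f" using homeomorphic_imp_surjective_map[OF h] by simp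
  ultimately have "bij f" by (simp add: bij_def)
  moreover have "pcont f" using h cont_imp_pcont homeomorphic_imp_continuous_map by blast
  ultimately show "bij f \<and> pcont f" by simp
next
  assume "bij f \<and> pcont f"
  then show "homeomorphic_map cantor_top cantor_top f"
    by (intro continuous_imp_homeomorphic_map pcont_imp_cont compact_cantor hausdorff_cantor)
       (auto simp: bij_def)
qed

lemma homeo_inv_pcont:
  assumes "bij f" "pcont f" shows "pcont (inv_into UNIV f)"
proof -
  have "homeomorphic_map cantor_top cantor_top f" using assms homeo_iff by simp
  then obtain g where g: "homeomorphic_maps cantor_top cantor_top f g" using homeomorphic_map_maps by blast
  have "g = inv_into UNIV f"
  proof
    fix y
    have "f (g y) = y" using g unfolding homeomorphic_maps_def by simp
    then show "g y = inv_into UNIV f y" using assms(1) by (metis bij_inv_eq_iff)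
  qed
  moreover have "continuous_map cantor_top cantor_top g" using g unfolding homeomorphic_maps_def by simp
  ultimately show ?thesis using cont_imp_pcont by simp
qed

definition pre :: "bool list \<Rightarrow> cantor \<Rightarrow> cantor" where
  "pre w x = (\<lambda>i. if i < length w then w ! i else x (i - length w))"
definition sdrop :: "nat \<Rightarrow> cantor \<Rightarrow> cantor" where "sdrop n x = (\<lambda>i. x (i + n))"
definition stake :: "nat \<Rightarrow> cantor \<Rightarrow> bool list" where "stake n x = map x [0..<n]"
definition lcpl :: "cantor set \<Rightarrow> nat" where "lcpl A = (GREATEST n. \<forall>x\<in>A. \<forall>y\<in>A. agree n x y)"
definition strip :: "(cantor \<Rightarrow> cantor) \<Rightarrow> cantor \<Rightarrow> cantor" where
  "strip h = (\<lambda>x. sdrop (lcpl (range h)) (h x))"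
definition lcpw :: "(cantor \<Rightarrow> cantor) \<Rightarrow> bool list" where
  "lcpw h = stake (lcpl (range h)) (h undefined)"
definition nontriv :: "(cantor \<Rightarrow> cantor) \<Rightarrow> bool" where
  "nontriv h \<longleftrightarrow> (\<exists>x y. h x \<noteq> h y)"
definition rset :: "(cantor \<Rightarrow> cantor) \<Rightarrow> (cantor \<Rightarrow> cantor) set" where
  "rset f = range (\<lambda>w. strip (f \<circ> pre w))"
definition RR :: "(cantor \<Rightarrow> cantor) \<Rightarrow> bool" where "RR f \<longleftrightarrow> finite (rset f)"

lemma length_stake [simp]: "length (stake n x) = n" by (simp add: stake_def)
lemma nth_stake [simp]: "i < n \<Longrightarrow> stake n x ! i = x i" by (simp add: stake_def)
lemma pre_Nil [simp]: "pre [] x = x" by (simp add: pre_def)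
lemma pre_Nil' [simp]: "pre [] = id" by (rule ext) (simp add: pre_def)
lemma sdrop_0 [simp]: "sdrop 0 x = x" by (simp add: sdrop_def)
lemma pre_pre: "pre w (pre v x) = pre (w @ v) x"
  by (auto simp: pre_def nth_append fun_eq_iff)
lemma pre_pre': "pre w \<circ> pre v = pre (w @ v)"
  by (simp add: fun_eq_iff pre_pre)
lemma sdrop_pre [simp]: "sdrop (length w) (pre w x) = x"
  by (simp add: sdrop_def pre_def)
lemma sdrop_sdrop: "sdrop m (sdrop n x) = sdrop (m + n) x"
  by (simp add: sdrop_def add.assoc)
lemma sdrop_pre_add: "sdrop (length w + n) (pre w x) = sdrop n x"
  by (simp add: sdrop_def pre_def)
lemma stake_pre [simp]: "stake (length w) (pre w x) = w"
  by (rule nth_equalityI) (auto simp: pre_def stake_def)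
lemma pre_stake_sdrop [simp]: "pre (stake n x) (sdrop n x) = x"
  by (simp add: stake_def pre_def sdrop_def fun_eq_iff)
lemma pre_inj: "pre w x = pre w y \<Longrightarrow> x = y"
  by (metis sdrop_pre)
lemma pre_nth_less: "i < length w \<Longrightarrow> pre w x i = w ! i" by (simp add: pre_def)
lemma pre_nth_ge: "length w \<le> i \<Longrightarrow> pre w x i = x (i - length w)" by (simp add: pre_def)
lemma pre_Cons: "pre (b # w) x = pre [b] (pre w x)" by (simp add: pre_pre)

lemma agree_pre: "agree (length c + n) (pre c x) (pre c y) \<longleftrightarrow> agree n x y"
proof
  assume a: "agree (length c + n) (pre c x) (pre c y)"
  show "agree n x y" unfolding agree_def
  proof (intro allI impI)
    fix i assume "i < n"
    then have "pre c x (length c + i) = pre c y (length c + i)" using a unfolding agree_def by simp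
    then show "x i = y i" by (simp add: pre_def)
  qed
next
  assume "agree n x y" then show "agree (length c + n) (pre c x) (pre c y)"
    unfolding agree_def pre_def by auto
qed

lemma agree_stake: "agree n x y \<Longrightarrow> stake n x = stake n y"
  by (simp add: agree_def stake_def)

lemma agree_mono: "agree n x y \<Longrightarrow> m \<le> n \<Longrightarrow> agree m x y"
  by (simp add: agree_def)

lemma agree_sym: "agree n x y \<Longrightarrow> agree n y x" by (simp add: agree_def)
lemma agree_trans: "agree n x y \<Longrightarrow> agree n y z \<Longrightarrow> agree n x z" by (simp add: agree_def)
lemma agree_refl [simp]: "agree n x x" by (simp add: agree_def)

lemma agree_sdrop: "agree (m + n) x y \<Longrightarrow> agree n (sdrop m x) (sdrop m y)"
  by (simp add: agree_def sdrop_def)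

lemma lcpl_props:
  assumes "x0 \<in> A" "y0 \<in> A" "x0 \<noteq> y0"
  shows "\<forall>x\<in>A. \<forall>y\<in>A. agree (lcpl A) x y"
    and "(\<forall>x\<in>A. \<forall>y\<in>A. agree n x y) \<Longrightarrow> n \<le> lcpl A"
    and "\<exists>x\<in>A. \<exists>y\<in>A. x (lcpl A) \<noteq> y (lcpl A)"
proof -
  obtain i where i: "x0 i \<noteq> y0 i" using assms(3) by auto
  let ?P = "\<lambda>n. \<forall>x\<in>A. \<forall>y\<in>A. agree n x y"
  have bnd: "\<forall>n. ?P n \<longrightarrow> n \<le> i"
  proof (intro allI impI)
    fix n assume "?P n"
    then have "agree n x0 y0" using assms by blast
    then show "n \<le> i" using i unfolding agree_def by (meson not_le)
  qed
  have P0: "?P 0" by (simp add: agree_def)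
  show 1: "\<forall>x\<in>A. \<forall>y\<in>A. agree (lcpl A) x y"
    unfolding lcpl_def using GreatestI_nat[of ?P 0 i] P0 bnd by blast
  have le: "?P m \<Longrightarrow> m \<le> lcpl A" for m
    unfolding lcpl_def using Greatest_le_nat[of ?P m i] bnd by blast
  then show "?P n \<Longrightarrow> n \<le> lcpl A" .
  have "\<not> ?P (Suc (lcpl A))" using le[of "Suc (lcpl A)"] by linarith
  then obtain x y where xy: "x \<in> A" "y \<in> A" "\<not> agree (Suc (lcpl A)) x y" by blast
  then have "x (lcpl A) \<noteq> y (lcpl A)" using 1 unfolding agree_def by (metis less_Suc_eq)
  then show "\<exists>x\<in>A. \<exists>y\<in>A. x (lcpl A) \<noteq> y (lcpl A)" using xy by blast
qed

lemma nontrivD: "nontriv h \<Longrightarrow> \<exists>a\<in>range h. \<exists>b\<in>range h. a \<noteq> b"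
  unfolding nontriv_def by blast

lemma lcpl_agree: assumes "nontriv h" shows "agree (lcpl (range h)) (h x) (h y)"
proof -
  obtain a b where "h a \<noteq> h b" using assms unfolding nontriv_def by blast
  from lcpl_props(1)[OF _ _ this] show ?thesis by simp
qed

lemma lcpl_le: assumes "nontriv h" "\<And>x y. agree n (h x) (h y)" shows "n \<le> lcpl (range h)"
proof -
  obtain a b where "h a \<noteq> h b" using assms unfolding nontriv_def by blast
  have "\<forall>x\<in>range h. \<forall>y\<in>range h. agree n x y" using assms(2) by auto
  with lcpl_props(2)[OF _ _ \<open>h a \<noteq> h b\<close>] show ?thesis by simp
qed

lemma lcpl_diff: assumes "nontriv h" shows "\<exists>x y. h x (lcpl (range h)) \<noteq> h y (lcpl (range h))"
proof -
  obtain a b where "h a \<noteq> h b" using assms unfolding nontriv_def by blast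
  from lcpl_props(3)[where A="range h", OF rangeI rangeI this] obtain u v where uv: "u \<in> range h" "v \<in> range h"
     "u (lcpl (range h)) \<noteq> v (lcpl (range h))" by blast
  from uv(1) obtain x where "u = h x" by auto
  moreover from uv(2) obtain y where "v = h y" by auto
  ultimately show ?thesis using uv(3) by auto
qed

lemma length_lcpw [simp]: "length (lcpw h) = lcpl (range h)"
  by (simp add: lcpw_def)

lemma decomp: "nontriv h \<Longrightarrow> h x = pre (lcpw h) (strip h x)"
proof -
  assume n: "nontriv h"
  have "agree (lcpl (range h)) (h x) (h undefined)" using lcpl_agree[OF n] .
  then have "stake (lcpl (range h)) (h undefined) = stake (lcpl (range h)) (h x)"
    by (simp add: agree_stake)
  then show ?thesis unfolding lcpw_def strip_def by simp
qed

lemma decomp': "nontriv h \<Longrightarrow> h = pre (lcpw h) \<circ> strip h"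
  using decomp by (auto simp: fun_eq_iff)

lemma nontriv_pre: "nontriv h \<Longrightarrow> nontriv (pre c \<circ> h)"
  unfolding nontriv_def by (auto dest: pre_inj)

lemma nontriv_strip: assumes "nontriv h" shows "nontriv (strip h)"
proof -
  obtain x y where "h x \<noteq> h y" using assms unfolding nontriv_def by blast
  then have "strip h x \<noteq> strip h y" using decomp[OF assms, of x] decomp[OF assms, of y] by metis
  then show ?thesis unfolding nontriv_def by blast
qed

lemma lcpl_pre: assumes n: "nontriv h"
  shows "lcpl (range (pre c \<circ> h)) = length c + lcpl (range h)"
proof (rule antisym)
  have n2: "nontriv (pre c \<circ> h)" using nontriv_pre[OF n] .
  show "length c + lcpl (range h) \<le> lcpl (range (pre c \<circ> h))"
    by (rule lcpl_le[OF n2]) (simp add: agree_pre lcpl_agree[OF n])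
  obtain x y where xy: "(pre c \<circ> h) x (lcpl (range (pre c \<circ> h))) \<noteq> (pre c \<circ> h) y (lcpl (range (pre c \<circ> h)))"
    using lcpl_diff[OF n2] by blast
  then have ge: "length c \<le> lcpl (range (pre c \<circ> h))"
    by (metis comp_apply not_le pre_nth_less)
  define m where "m = lcpl (range (pre c \<circ> h)) - length c"
  have "agree (length c + m) (pre c (h x)) (pre c (h y))" for x y
    using lcpl_agree[OF n2, of x y] ge unfolding m_def by simp
  then have "m \<le> lcpl (range h)" using lcpl_le[OF n] agree_pre by blast
  then show "lcpl (range (pre c \<circ> h)) \<le> length c + lcpl (range h)" unfolding m_def by simp
qed

lemma strip_pre: assumes "nontriv h" shows "strip (pre c \<circ> h) = strip h"
  unfolding strip_def lcpl_pre[OF assms] by (simp add: fun_eq_iff sdrop_pre_add)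

lemma lcpl_strip: assumes n: "nontriv h" shows "lcpl (range (strip h)) = 0"
proof -
  have "lcpl (range h) = lcpl (range (pre (lcpw h) \<circ> strip h))" using decomp'[OF n] by simp
  also have "\<dots> = lcpl (range h) + lcpl (range (strip h))"
    using lcpl_pre[OF nontriv_strip[OF n]] by simp
  finally show ?thesis by simp
qed

lemma strip_strip: "nontriv h \<Longrightarrow> strip (strip h) = strip h"
  using lcpl_strip unfolding strip_def[of "strip h"] by (simp add: fun_eq_iff)

lemma lcpl0_diff: "nontriv h \<Longrightarrow> lcpl (range h) = 0 \<Longrightarrow> \<exists>x y. h x 0 \<noteq> h y 0"
  using lcpl_diff by fastforce

lemma inj_nontriv: "inj h \<Longrightarrow> nontriv h"
proof -
  assume "inj h"
  have "(\<lambda>_::nat. True) \<noteq> (\<lambda>_. False)" by (simp add: fun_eq_iff)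
  then show "nontriv h" unfolding nontriv_def using \<open>inj h\<close> by (metis injD)
qed

lemma inj_strip: "inj h \<Longrightarrow> inj (strip h)"
  by (metis decomp inj_nontriv injD injI)

lemma inj_pre: "inj (pre w)" by (meson injI pre_inj)

lemma inj_comp_pre: "inj h \<Longrightarrow> inj (h \<circ> pre w)"
  using inj_pre inj_compose by blast

lemma nontriv_id: "nontriv id" using inj_nontriv by simp

lemma lcpl_id: "lcpl (range id) = 0"
proof -
  have "\<not> agree 1 (\<lambda>_. True) (\<lambda>_. False)" by (simp add: agree_def)
  then have "\<not> 1 \<le> lcpl (range id)" using lcpl_agree[OF nontriv_id] by (metis agree_mono id_apply)
  then show ?thesis by simp
qed

lemma lcpl_UNIV: "lcpl UNIV = 0" using lcpl_id by simp

lemma strip_id [simp]: "strip id = id"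
  by (simp add: strip_def lcpl_UNIV fun_eq_iff)

lemma strip_pre_id [simp]: "strip (pre c) = id"
  using strip_pre[OF nontriv_id, of c] strip_id by simp

lemma rset_comp:
  assumes f: "inj f" and g: "inj g"
  shows "rset (f \<circ> g) \<subseteq> (\<lambda>(a, b). strip (a \<circ> b)) ` (rset f \<times> rset g)"
proof
  fix r assume "r \<in> rset (f \<circ> g)"
  then obtain w where r: "r = strip (f \<circ> g \<circ> pre w)" unfolding rset_def by auto
  define G where "G = g \<circ> pre w"
  have iG: "inj G" unfolding G_def using inj_comp_pre[OF g] .
  define c where "c = lcpw G"
  define gw where "gw = strip G"
  have G: "G = pre c \<circ> gw" unfolding c_def gw_def using decomp'[OF inj_nontriv[OF iG]] .
  define F where "F = f \<circ> pre c"
  have iF: "inj F" unfolding F_def using inj_comp_pre[OF f] .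
  define d where "d = lcpw F"
  define fc where "fc = strip F"
  have F: "F = pre d \<circ> fc" unfolding d_def fc_def using decomp'[OF inj_nontriv[OF iF]] .
  have "f \<circ> g \<circ> pre w = pre d \<circ> (fc \<circ> gw)"
    using G F unfolding G_def F_def by (simp add: comp_assoc) (metis comp_assoc)
  moreover have "inj (fc \<circ> gw)"
    using inj_strip[OF iF] inj_strip[OF iG] unfolding fc_def gw_def by (rule inj_compose)
  ultimately have "r = strip (fc \<circ> gw)" using r strip_pre inj_nontriv by metis
  moreover have "fc \<in> rset f" unfolding fc_def F_def rset_def by auto
  moreover have "gw \<in> rset g" unfolding gw_def G_def rset_def by auto
  ultimately show "r \<in> (\<lambda>(a, b). strip (a \<circ> b)) ` (rset f \<times> rset g)" by force
qed

lemma RR_comp: "inj f \<Longrightarrow> inj g \<Longrightarrow> RR f \<Longrightarrow> RR g \<Longrightarrow> RR (f \<circ> g)"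
  unfolding RR_def using rset_comp by (meson finite_SigmaI finite_imageI finite_subset)

lemma sdrop_pre_le: "n \<le> length v \<Longrightarrow> sdrop n (pre v x) = pre (drop n v) x"
  by (auto simp: sdrop_def pre_def fun_eq_iff add.commute)

lemma rset_inv:
  assumes bf: "bij f" and pf: "pcont f" and rf: "RR f"
  shows "RR (inv_into UNIV f)"
proof -
  define g where "g = inv_into UNIV f"
  have ug: "ucont g" unfolding g_def using homeo_inv_pcont[OF bf pf] pcont_imp_ucont by blast
  have fi: "inj f" using bf bij_is_inj by blast
  have gf: "g (f x) = x" for x unfolding g_def using fi by simp
  have fg: "f (g x) = x" for x unfolding g_def using bf by (simp add: bij_is_surj surj_f_inv_f)
  have ig: "inj g" by (metis fg injI)
  have sep: "\<exists>N. \<forall>x y. x 0 \<noteq> y 0 \<longrightarrow> \<not> agree N (h x) (h y)" if h: "h \<in> rset f" for h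
  proof -
    obtain p where hp: "h = strip (f \<circ> pre p)" using h unfolding rset_def by auto
    define F where "F = f \<circ> pre p"
    have iF: "inj F" unfolding F_def using inj_comp_pre[OF fi] .
    have Fx: "F x = pre (lcpw F) (h x)" for x unfolding hp F_def[symmetric] using decomp[OF inj_nontriv[OF iF]] .
    obtain M where M: "\<forall>x y. agree M y x \<longrightarrow> agree (Suc (length p)) (g y) (g x)"
      using ug unfolding ucont_def by blast
    show ?thesis
    proof (intro exI allI impI notI)
      fix x y assume xy: "x 0 \<noteq> y 0" and a: "agree M (h x) (h y)"
      then have "agree (length (lcpw F) + M) (F x) (F y)" using Fx agree_pre by metis
      then have "agree M (F x) (F y)" by (rule agree_mono) simp
      then have "agree (Suc (length p)) (g (F x)) (g (F y))" using M agree_sym by blast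
      then have "agree (Suc (length p)) (pre p x) (pre p y)" unfolding F_def by (simp add: gf)
      then have "pre p x (length p) = pre p y (length p)" unfolding agree_def by simp
      then show False using xy by (simp add: pre_def)
    qed
  qed
  then obtain Nf where Nf: "\<forall>h\<in>rset f. \<forall>x y. x 0 \<noteq> y 0 \<longrightarrow> \<not> agree (Nf h) (h x) (h y)"
    by metis
  define T where "T = (\<Union>h\<in>rset f. (\<lambda>v'. \<lambda>x. inv_into UNIV h (pre v' x)) ` {v'. set v' \<subseteq> UNIV \<and> length v' \<le> Nf h})"
  have "finite T" unfolding T_def using rf unfolding RR_def
  proof (intro finite_UN_I)
    fix h show "finite ((\<lambda>v'. \<lambda>x. inv_into UNIV h (pre v' x)) ` {v'. set v' \<subseteq> UNIV \<and> length v' \<le> Nf h})"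
      by (intro finite_imageI finite_lists_length_le) simp
  qed
  moreover have "rset g \<subseteq> T"
  proof
    fix r assume "r \<in> rset g"
    then obtain v where r: "r = strip (g \<circ> pre v)" unfolding rset_def by auto
    define G where "G = g \<circ> pre v"
    have iG: "inj G" unfolding G_def using inj_comp_pre[OF ig] .
    define p where "p = lcpw G"
    define gv where "gv = strip G"
    have G: "G x = pre p (gv x)" for x unfolding p_def gv_def using decomp[OF inj_nontriv[OF iG]] .
    define F where "F = f \<circ> pre p"
    have iF: "inj F" unfolding F_def using inj_comp_pre[OF fi] .
    define d where "d = lcpw F"
    define h where "h = strip F"
    have F: "F x = pre d (h x)" for x unfolding d_def h_def using decomp[OF inj_nontriv[OF iF]] .
    have hR: "h \<in> rset f" unfolding h_def F_def rset_def by auto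
    have ih: "inj h" unfolding h_def using inj_strip[OF iF] .
    have key: "pre v x = pre d (h (gv x))" for x
    proof -
      have "pre v x = f (G x)" unfolding G_def by (simp add: fg)
      also have "\<dots> = F (gv x)" unfolding F_def by (simp add: G)
      finally show ?thesis using F by simp
    qed
    have dv: "length d \<le> length v"
    proof (rule ccontr)
      assume "\<not> length d \<le> length v"
      then have "length v < length d" by simp
      then have "pre v (\<lambda>_. True) (length v) = d ! length v" "pre v (\<lambda>_. False) (length v) = d ! length v"
        using key by (metis pre_nth_less)+
      then show False by (simp add: pre_def)
    qed
    define v' where "v' = drop (length d) v"
    have hv: "h (gv x) = pre v' x" for x
    proof -
      have "pre v' x = sdrop (length d) (pre v x)" unfolding v'_def using sdrop_pre_le[OF dv] by simp
      also have "\<dots> = h (gv x)" using key by simp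
      finally show ?thesis by simp
    qed
    have gvx: "gv = (\<lambda>x. inv_into UNIV h (pre v' x))"
      using hv ih by (metis inv_f_f ext)
    have "nontriv gv" unfolding gv_def using inj_nontriv[OF inj_strip[OF iG]] .
    moreover have "lcpl (range gv) = 0" unfolding gv_def using lcpl_strip[OF inj_nontriv[OF iG]] .
    ultimately obtain x y where xy: "gv x 0 \<noteq> gv y 0" using lcpl0_diff by blast
    have "length v' < Nf h"
    proof (rule ccontr)
      assume "\<not> length v' < Nf h"
      then have "agree (Nf h) (pre v' x) (pre v' y)" unfolding agree_def by (simp add: pre_def)
      then have "agree (Nf h) (h (gv x)) (h (gv y))" using hv by simp
      moreover have "\<not> agree (Nf h) (h (gv x)) (h (gv y))" using bspec[OF Nf hR, rule_format, of "gv x" "gv y", OF xy] .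
      ultimately show False by contradiction
    qed
    then have "gv \<in> (\<lambda>v'. \<lambda>x. inv_into UNIV h (pre v' x)) ` {v'. set v' \<subseteq> UNIV \<and> length v' \<le> Nf h}"
      by (intro rev_image_eqI[of v']) (auto simp: gvx)
    moreover have "r = gv" unfolding r gv_def G_def ..
    ultimately show "r \<in> T" unfolding T_def using hR by blast
  qed
  ultimately show ?thesis unfolding RR_def g_def by (rule finite_subset[rotated])
qed

lemma out_Suc: "tr_out_prefix t out s0 x (Suc n) = tr_out_prefix t out s0 x n @ out (tr_run t s0 x n) (x n)"
  by (simp add: tr_out_prefix_def)

lemma out_0 [simp]: "tr_out_prefix t out s0 x 0 = []"
  by (simp add: tr_out_prefix_def)

lemma out_mono: "m \<le> n \<Longrightarrow> \<exists>r. tr_out_prefix t out s0 x n = tr_out_prefix t out s0 x m @ r"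
proof (induction n)
  case 0 then show ?case by simp
next
  case (Suc n)
  show ?case
  proof (cases "m = Suc n")
    case True then show ?thesis by simp
  next
    case False
    then have "m \<le> n" using Suc.prems by simp
    then obtain r where "tr_out_prefix t out s0 x n = tr_out_prefix t out s0 x m @ r" using Suc.IH by blast
    then show ?thesis by (simp add: out_Suc)
  qed
qed

lemma out_nth_eq:
  assumes "k < length (tr_out_prefix t out s0 x m)" "k < length (tr_out_prefix t out s0 x n)"
  shows "tr_out_prefix t out s0 x m ! k = tr_out_prefix t out s0 x n ! k"
proof (cases "m \<le> n")
  case True
  then obtain r where "tr_out_prefix t out s0 x n = tr_out_prefix t out s0 x m @ r" using out_mono by blast
  then show ?thesis using assms by (simp add: nth_append)
next
  case False
  then have "n \<le> m" by simp
  then obtain r where "tr_out_prefix t out s0 x m = tr_out_prefix t out s0 x n @ r"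
    using out_mono by blast
  then show ?thesis using assms by (simp add: nth_append)
qed

lemma run_indep: "k \<le> length w \<Longrightarrow> tr_run t s0 (pre w x) k = tr_run t s0 (pre w y) k"
  by (induction k) (auto simp: pre_def)

lemma out_indep: "k \<le> length w \<Longrightarrow> tr_out_prefix t out s0 (pre w x) k = tr_out_prefix t out s0 (pre w y) k"
proof (induction k)
  case 0 then show ?case by simp
next
  case (Suc k)
  then have "tr_run t s0 (pre w x) k = tr_run t s0 (pre w y) k" using run_indep by simp
  moreover have "pre w x k = pre w y k" using Suc.prems by (simp add: pre_def)
  ultimately show ?case using Suc by (simp add: out_Suc)
qed

lemma run_append: "tr_run t s0 (pre w x) (length w + n) = tr_run t (tr_run t s0 (pre w x) (length w)) x n"
  by (induction n) (auto simp: pre_def)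

lemma out_append: "tr_out_prefix t out s0 (pre w x) (length w + n) =
   tr_out_prefix t out s0 (pre w x) (length w) @ tr_out_prefix t out (tr_run t s0 (pre w x) (length w)) x n"
proof (induction n)
  case 0 then show ?case by simp
next
  case (Suc n)
  have "pre w x (length w + n) = x n" by (simp add: pre_def)
  then show ?case using Suc by (simp add: out_Suc run_append)
qed

lemma run_in_S: "s0 \<in> S \<Longrightarrow> \<forall>s\<in>S. \<forall>b. t s b \<in> S \<Longrightarrow> tr_run t s0 x n \<in> S"
  by (induction n) auto

definition Phi :: "(nat \<Rightarrow> bool \<Rightarrow> nat) \<Rightarrow> (nat \<Rightarrow> bool \<Rightarrow> bool list) \<Rightarrow> nat \<Rightarrow> cantor \<Rightarrow> cantor" where
  "Phi t out s x = (\<lambda>k. tr_out_prefix t out s x (LEAST n. k < length (tr_out_prefix t out s x n)) ! k)"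

lemma computes_nth:
  assumes "transducer_computes S s0 t out f" "k < length (tr_out_prefix t out s0 x n)"
  shows "tr_out_prefix t out s0 x n ! k = f x k"
proof -
  obtain m where "k < length (tr_out_prefix t out s0 x m)" "tr_out_prefix t out s0 x m ! k = f x k"
    using assms(1) unfolding transducer_computes_def by blast
  moreover have "tr_out_prefix t out s0 x n ! k = tr_out_prefix t out s0 x m ! k"
    using out_nth_eq assms(2) \<open>k < length (tr_out_prefix t out s0 x m)\<close> by blast
  ultimately show ?thesis by simp
qed

lemma computes_decomp:
  assumes c: "transducer_computes S s0 t out f"
  shows "f (pre w x) = pre (tr_out_prefix t out s0 (pre w x) (length w)) (Phi t out (tr_run t s0 (pre w x) (length w)) x)"
    (is "_ = pre ?o (Phi t out ?s x)")
proof
  fix i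
  show "f (pre w x) i = pre ?o (Phi t out ?s x) i"
  proof (cases "i < length ?o")
    case True
    then show ?thesis using computes_nth[OF c True] by (simp add: pre_nth_less)
  next
    case False
    define k where "k = i - length ?o"
    have i: "i = length ?o + k" using False k_def by simp
    obtain m where m: "i < length (tr_out_prefix t out s0 (pre w x) m)"
      using c unfolding transducer_computes_def by blast
    have "length w \<le> m"
    proof (rule ccontr)
      assume "\<not> length w \<le> m"
      then have "m \<le> length w" by simp
      then obtain r where "?o = tr_out_prefix t out s0 (pre w x) m @ r" using out_mono by blast
      then show False using m False by simp
    qed
    then obtain n where n: "m = length w + n" using le_Suc_ex by blast
    have kn: "k < length (tr_out_prefix t out ?s x n)" using m unfolding n out_append i by simp
    define n0 where "n0 = (LEAST n. k < length (tr_out_prefix t out ?s x n))"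
    have n0: "k < length (tr_out_prefix t out ?s x n0)" unfolding n0_def using kn by (rule LeastI)
    have "Phi t out ?s x i' = tr_out_prefix t out ?s x n0 ! i'" if "i' = k" for i'
      unfolding Phi_def n0_def that ..
    then have "Phi t out ?s x k = tr_out_prefix t out ?s x n ! k" using out_nth_eq[OF n0 kn] by simp
    also have "\<dots> = tr_out_prefix t out s0 (pre w x) m ! i" unfolding n out_append i by (simp add: nth_append)
    also have "\<dots> = f (pre w x) i" using computes_nth[OF c m] .
    finally have "Phi t out ?s x k = f (pre w x) i" .
    moreover have "pre ?o (Phi t out ?s x) i = Phi t out ?s x k" unfolding i by (simp add: pre_nth_ge)
    ultimately show ?thesis by simp
  qed
qed

lemma computes_RR:
  assumes c: "transducer_computes S s0 t out f" and fi: "inj f"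
  shows "RR f"
proof -
  have "rset f \<subseteq> (\<lambda>s. strip (Phi t out s)) ` S"
  proof
    fix r assume "r \<in> rset f"
    then obtain w where r: "r = strip (f \<circ> pre w)" unfolding rset_def by auto
    define z :: cantor where "z = (\<lambda>_. False)"
    define o' where "o' = tr_out_prefix t out s0 (pre w z) (length w)"
    define s where "s = tr_run t s0 (pre w z) (length w)"
    have fx: "f (pre w x) = pre o' (Phi t out s x)" for x
      using computes_decomp[OF c, of w x] out_indep[of "length w" w t out s0 x z] run_indep[of "length w" w t s0 x z]
      unfolding o'_def s_def by simp
    then have fw: "f \<circ> pre w = pre o' \<circ> Phi t out s" by (simp add: fun_eq_iff)
    have "nontriv (f \<circ> pre w)" using inj_nontriv inj_comp_pre[OF fi] by blast
    then obtain x y where "f (pre w x) \<noteq> f (pre w y)" unfolding nontriv_def by auto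
    then have "Phi t out s x \<noteq> Phi t out s y" using fx by metis
    then have "nontriv (Phi t out s)" unfolding nontriv_def by blast
    then have "r = strip (Phi t out s)" unfolding r fw by (rule strip_pre)
    moreover have "s \<in> S" unfolding s_def using c unfolding transducer_computes_def by (meson run_in_S)
    ultimately show "r \<in> (\<lambda>s. strip (Phi t out s)) ` S" by blast
  qed
  moreover have "finite S" using c unfolding transducer_computes_def by blast
  ultimately show ?thesis unfolding RR_def by (meson finite_imageI finite_subset)
qed

lemma nxt_strip:
  assumes "inj F"
  shows "strip (strip F \<circ> pre [b]) = strip (F \<circ> pre [b])"
proof -
  have "F \<circ> pre [b] = pre (lcpw F) \<circ> (strip F \<circ> pre [b])"
    using decomp'[OF inj_nontriv[OF assms]] by (metis comp_assoc)
  moreover have "nontriv (strip F \<circ> pre [b])"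
    using inj_nontriv[OF inj_comp_pre[OF inj_strip[OF assms]]] .
  ultimately show ?thesis using strip_pre by metis
qed

definition hw :: "(cantor \<Rightarrow> cantor) \<Rightarrow> bool list \<Rightarrow> cantor \<Rightarrow> cantor" where
  "hw f w = (if w = [] then f else strip (f \<circ> pre w))"

lemma hw_inj: "inj f \<Longrightarrow> inj (hw f w)"
  unfolding hw_def using inj_strip inj_comp_pre by auto

lemma hw_in: "hw f w \<in> insert f (rset f)"
  unfolding hw_def rset_def by auto

lemma hw_snoc: assumes "inj f" shows "strip (hw f w \<circ> pre [b]) = hw f (w @ [b])"
proof (cases "w = []")
  case True then show ?thesis by (simp add: hw_def)
next
  case False
  then have "strip (hw f w \<circ> pre [b]) = strip (f \<circ> pre w \<circ> pre [b])"
    unfolding hw_def using nxt_strip[OF inj_comp_pre[OF assms]] by simp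
  also have "\<dots> = hw f (w @ [b])" unfolding hw_def by (simp add: comp_assoc pre_pre')
  finally show ?thesis .
qed

lemma stake_Suc: "stake (Suc n) x = stake n x @ [x n]" by (simp add: stake_def)

lemma RR_computes:
  assumes bf: "bij f" and pf: "pcont f" and rf: "RR f"
  shows "\<exists>S s0 t out. transducer_computes S s0 t out f"
proof -
  have fi: "inj f" using bf bij_is_inj by blast
  define H where "H = insert f (rset f)"
  have fH: "finite H" using rf unfolding RR_def H_def by simp
  obtain e :: "(cantor \<Rightarrow> cantor) \<Rightarrow> nat" and m where e: "e ` H = {i. i < m}" "inj_on e H"
    using finite_imp_inj_to_nat_seg[OF fH] by blast
  define d where "d = inv_into H e"
  have de: "h \<in> H \<Longrightarrow> d (e h) = h" for h unfolding d_def using e(2) by simp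
  define t where "t = (\<lambda>s b. e (strip (d s \<circ> pre [b])))"
  define out where "out = (\<lambda>s b. lcpw (d s \<circ> pre [b]))"
  define S where "S = e ` H"
  have hwH: "hw f w \<in> H" for w using hw_in unfolding H_def .
  have run: "tr_run t (e f) x n = e (hw f (stake n x))" for x n
  proof (induction n)
    case 0 then show ?case by (simp add: hw_def stake_def)
  next
    case (Suc n)
    have "tr_run t (e f) x (Suc n) = e (strip (hw f (stake n x) \<circ> pre [x n]))"
      using Suc by (simp add: t_def de[OF hwH])
    also have "\<dots> = e (hw f (stake (Suc n) x))" using hw_snoc[OF fi] by (simp add: stake_Suc)
    finally show ?case .
  qed
  have outp: "f (pre (stake n x) y) = pre (tr_out_prefix t out (e f) x n) (hw f (stake n x) y)" for x n y
  proof (induction n arbitrary: y)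
    case 0 then show ?case by (simp add: hw_def stake_def)
  next
    case (Suc n)
    define w where "w = stake n x"
    define h where "h = hw f w"
    have ih: "inj h" unfolding h_def using hw_inj[OF fi] .
    have dec: "h (pre [x n] y) = pre (lcpw (h \<circ> pre [x n])) (strip (h \<circ> pre [x n]) y)"
      using decomp[OF inj_nontriv[OF inj_comp_pre[OF ih]]] by simp
    have o: "out (tr_run t (e f) x n) (x n) = lcpw (h \<circ> pre [x n])"
      unfolding out_def run h_def w_def by (simp add: de[OF hwH])
    have "f (pre (stake (Suc n) x) y) = f (pre w (pre [x n] y))"
      unfolding w_def stake_Suc by (simp add: pre_pre)
    also have "\<dots> = pre (tr_out_prefix t out (e f) x n) (h (pre [x n] y))"
      using Suc unfolding w_def h_def by simp
    also have "\<dots> = pre (tr_out_prefix t out (e f) x n) (pre (lcpw (h \<circ> pre [x n])) (strip (h \<circ> pre [x n]) y))"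
      using dec by simp
    also have "\<dots> = pre (tr_out_prefix t out (e f) x (Suc n)) (hw f (stake (Suc n) x) y)"
      using hw_snoc[OF fi] unfolding out_Suc o h_def w_def
      by (simp add: pre_pre stake_Suc)
    finally show ?case .
  qed
  have "transducer_computes S (e f) t out f"
    unfolding transducer_computes_def
  proof (intro conjI allI ballI)
    show "finite S" unfolding S_def using fH by simp
    show "e f \<in> S" unfolding S_def H_def by simp
    fix s b assume "s \<in> S"
    then obtain h where h: "h \<in> H" "s = e h" unfolding S_def by blast
    have "strip (h \<circ> pre [b]) \<in> H"
    proof (cases "h = f")
      case True then show ?thesis unfolding H_def rset_def by auto
    next
      case False
      then obtain w where "h = strip (f \<circ> pre w)" using h(1) unfolding H_def rset_def by auto
      then have "strip (h \<circ> pre [b]) = strip (f \<circ> pre (w @ [b]))"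
        using nxt_strip[OF inj_comp_pre[OF fi]] by (simp add: comp_assoc pre_pre')
      then show ?thesis unfolding H_def rset_def by auto
    qed
    then show "t s b \<in> S" unfolding t_def S_def using h de by simp
  next
    fix x k
    obtain n0 where n0: "\<forall>y. agree n0 y x \<longrightarrow> agree (Suc k) (f y) (f x)" using pf unfolding pcont_def by blast
    define n where "n = Suc n0"
    define w where "w = stake n x"
    define o' where "o' = tr_out_prefix t out (e f) x n"
    have wne: "w \<noteq> []" unfolding w_def n_def by (simp add: stake_def)
    have hs: "hw f w = strip (f \<circ> pre w)" using wne by (simp add: hw_def)
    have fw: "f \<circ> pre w = pre o' \<circ> hw f w" using outp unfolding w_def o'_def by (simp add: fun_eq_iff)
    have nt: "nontriv (hw f w)" using inj_nontriv[OF hw_inj[OF fi]] .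
    have "Suc k \<le> lcpl (range (f \<circ> pre w))"
    proof (rule lcpl_le)
      show "nontriv (f \<circ> pre w)" using inj_nontriv[OF inj_comp_pre[OF fi]] .
      fix y z
      have "agree n0 (pre w y) x" "agree n0 (pre w z) x"
        unfolding w_def n_def agree_def by (simp_all add: pre_nth_less)
      then have "agree (Suc k) (f (pre w y)) (f x)" "agree (Suc k) (f (pre w z)) (f x)" using n0 by blast+
      then show "agree (Suc k) ((f \<circ> pre w) y) ((f \<circ> pre w) z)"
        unfolding agree_def by simp
    qed
    also have "lcpl (range (f \<circ> pre w)) = length o'"
      unfolding fw lcpl_pre[OF nt] using lcpl_strip[OF inj_nontriv[OF inj_comp_pre[OF fi]]] hs by simp
    finally have ko: "k < length o'" by simp
    have "f x = f (pre w (sdrop n x))" unfolding w_def by simp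
    also have "\<dots> = pre o' (hw f w (sdrop n x))" using fw by (metis comp_apply)
    finally have "f x k = o' ! k" using ko by (simp add: pre_nth_less)
    then show "\<exists>n. k < length (tr_out_prefix t out (e f) x n) \<and> tr_out_prefix t out (e f) x n ! k = f x k"
      using ko unfolding o'_def by metis
  qed
  then show ?thesis by blast
qed

lemma RH_iff: "f \<in> rational_homeos \<longleftrightarrow> bij f \<and> pcont f \<and> RR f"
proof
  assume "f \<in> rational_homeos"
  then have h: "homeomorphic_map cantor_top cantor_top f" and c: "\<exists>S s0 t out. transducer_computes S s0 t out f"
    unfolding rational_homeos_def by auto
  then have "bij f" "pcont f" using homeo_iff by auto
  moreover have "RR f" using c computes_RR bij_is_inj[OF \<open>bij f\<close>] by blast
  ultimately show "bij f \<and> pcont f \<and> RR f" by simp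
next
  assume a: "bij f \<and> pcont f \<and> RR f"
  then have "homeomorphic_map cantor_top cantor_top f" using homeo_iff by simp
  moreover have "\<exists>S s0 t out. transducer_computes S s0 t out f" using a RR_computes by blast
  ultimately show "f \<in> rational_homeos" unfolding rational_homeos_def by simp
qed

lemma pcont_comp: "pcont f \<Longrightarrow> pcont g \<Longrightarrow> pcont (f \<circ> g)"
  unfolding pcont_def comp_def by metis

lemma pcont_id: "pcont id" unfolding pcont_def by auto

lemma rset_id: "rset id = {id}" unfolding rset_def by auto

lemma RH_comp: "f \<in> rational_homeos \<Longrightarrow> g \<in> rational_homeos \<Longrightarrow> f \<circ> g \<in> rational_homeos"
  unfolding RH_iff using bij_comp pcont_comp RR_comp bij_is_inj by metis

lemma RH_id: "id \<in> rational_homeos"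
  unfolding RH_iff RR_def rset_id using pcont_id by simp

lemma RH_inv: "f \<in> rational_homeos \<Longrightarrow> inv_into UNIV f \<in> rational_homeos"
  unfolding RH_iff using bij_imp_bij_inv homeo_inv_pcont rset_inv by metis

lemma RH_pow: "f \<in> rational_homeos \<Longrightarrow> f ^^ n \<in> rational_homeos"
  by (induction n) (auto simp: RH_id RH_comp)

lemma inv_RG:
  assumes "h \<in> rational_homeos"
  shows "m_inv RG h = inv_into UNIV h"
proof -
  have b: "bij h" using assms RH_iff by blast
  have hi: "h \<circ> inv_into UNIV h = id" using b by (intro ext) (simp add: bij_is_surj surj_f_inv_f)
  have ih: "inv_into UNIV h \<circ> h = id" using b by (intro ext) (simp add: bij_is_inj inv_f_f)
  show ?thesis unfolding m_inv_def RG_def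
  proof (simp, rule the_equality)
    show "inv_into UNIV h \<in> rational_homeos \<and> h \<circ> inv_into UNIV h = id \<and> inv_into UNIV h \<circ> h = id"
      using RH_inv[OF assms] hi ih by simp
    fix y assume "y \<in> rational_homeos \<and> h \<circ> y = id \<and> y \<circ> h = id"
    then have "h \<circ> y = id" by simp
    then have "inv_into UNIV h \<circ> (h \<circ> y) = inv_into UNIV h" by simp
    then show "y = inv_into UNIV h" using ih by (simp add: comp_assoc[symmetric])
  qed
qed

lemma commutator_in:
  assumes "a \<in> rational_homeos" "b \<in> rational_homeos"
  shows "a \<circ> b \<circ> inv_into UNIV a \<circ> inv_into UNIV b \<in> derived RG (carrier RG)"
proof -
  have "a \<circ> b \<circ> inv_into UNIV a \<circ> inv_into UNIV b \<in> derived_set RG (carrier RG)"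
  proof -
    have "a \<circ> b \<circ> inv_into UNIV a \<circ> inv_into UNIV b = a \<otimes>\<^bsub>RG\<^esub> b \<otimes>\<^bsub>RG\<^esub> (m_inv RG a) \<otimes>\<^bsub>RG\<^esub> (m_inv RG b)"
      using assms by (simp add: inv_RG) (simp add: RG_def)
    moreover have "a \<in> carrier RG" "b \<in> carrier RG" using assms by (simp_all add: RG_def)
    ultimately show ?thesis by blast
  qed
  then show ?thesis unfolding derived_def by (rule generate.incl)
qed

lemma RR_cover: "(\<And>w. strip (f \<circ> pre w) \<in> T) \<Longrightarrow> finite T \<Longrightarrow> RR f"
  unfolding RR_def rset_def by (meson finite_subset image_subsetI)

lemma finite_short_lists: "finite {w :: bool list. length w \<le> n}"
  using finite_lists_length_le[of "UNIV :: bool set" n] by simp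

lemma pre_head1: "pre [x 0] (sdrop 1 x) = x"
  using pre_stake_sdrop[of 1 x] by (simp add: stake_def)

lemma pre_head2: "pre [x 0, x 1] (sdrop 2 x) = x"
  using pre_stake_sdrop[of 2 x] by (simp add: stake_def numeral_2_eq_2)

lemma pre_single_0 [simp]: "pre [b] x 0 = b" by (simp add: pre_def)
lemma pre_Cons_0 [simp]: "pre (b # w) x 0 = b" by (simp add: pre_def)
lemma pre_Cons_Suc [simp]: "pre (b # w) x (Suc i) = pre w x i" by (simp add: pre_def)
lemma pre_single_Suc [simp]: "pre [b] x (Suc i) = x i" by (simp add: pre_def)

definition msk :: "bool list \<Rightarrow> cantor \<Rightarrow> cantor" where
  "msk m x = (\<lambda>i. if i < length m then x i \<noteq> m ! i else x i)"

lemma msk_msk [simp]: "msk m (msk m x) = x"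
  by (auto simp: msk_def fun_eq_iff)

lemma bij_msk: "bij (msk m)"
  by (rule o_bij[where g = "msk m"]) (simp_all add: fun_eq_iff)

lemma pcont_msk: "pcont (msk m)"
  unfolding pcont_def agree_def msk_def by auto

lemma RR_msk: "RR (msk m)"
proof (rule RR_cover)
  let ?T = "insert id ((\<lambda>w. strip (msk m \<circ> pre w)) ` {w. length w \<le> length m})"
  show "finite ?T" using finite_short_lists by simp
  fix w
  show "strip (msk m \<circ> pre w) \<in> ?T"
  proof (cases "length w \<le> length m")
    case True then show ?thesis by simp
  next
    case False
    define w' where "w' = stake (length w) (msk m (pre w (\<lambda>_. False)))"
    have "msk m \<circ> pre w = pre w'"
    proof (rule ext)
      fix y show "(msk m \<circ> pre w) y = pre w' y"
        unfolding w'_def using False by (auto simp: fun_eq_iff msk_def pre_def)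
    qed
    then show ?thesis by simp
  qed
qed

lemma RH_msk: "msk m \<in> rational_homeos"
  using RH_iff bij_msk pcont_msk RR_msk by blast

definition gT :: "cantor \<Rightarrow> cantor" where
  "gT x = (if \<not> x 0 then pre [False] x else if \<not> x 1 then pre [False, True] (sdrop 2 x) else sdrop 1 x)"

definition gI :: "cantor \<Rightarrow> cantor" where
  "gI y = (if \<not> y 0 then (if \<not> y 1 then sdrop 1 y else pre [True, False] (sdrop 2 y)) else pre [True] y)"

lemma sdrop_nth: "sdrop n x i = x (i + n)" by (simp add: sdrop_def)

lemma gI_gT: "gI (gT x) = x"
proof -
  consider "\<not> x 0" | "x 0" "\<not> x 1" | "x 0" "x 1" by blast
  then show ?thesis
  proof cases
    case 1 then show ?thesis unfolding gT_def gI_def by (simp add: pre_def sdrop_def)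
  next
    case 2
    then have "gI (gT x) = pre [x 0, x 1] (sdrop 2 x)" unfolding gT_def gI_def
      by (simp add: sdrop_pre_le[of 2 "[False, True]", simplified] sdrop_sdrop)
    then show ?thesis using pre_head2 by simp
  next
    case 3
    then have "gI (gT x) = pre [x 0] (sdrop 1 x)" unfolding gT_def gI_def by (simp add: sdrop_nth)
    then show ?thesis using pre_head1 by simp
  qed
qed

lemma gT_gI: "gT (gI y) = y"
proof -
  consider "\<not> y 0" "\<not> y 1" | "\<not> y 0" "y 1" | "y 0" by blast
  then show ?thesis
  proof cases
    case 1
    then have "gT (gI y) = pre [y 0] (sdrop 1 y)" unfolding gT_def gI_def by (simp add: sdrop_nth)
    then show ?thesis using pre_head1 by simp
  next
    case 2
    then have "gT (gI y) = pre [y 0, y 1] (sdrop 2 y)" unfolding gT_def gI_def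
      by (simp add: sdrop_pre_le[of 2 "[True, False]", simplified])
    then show ?thesis using pre_head2 by simp
  next
    case 3 then show ?thesis unfolding gT_def gI_def by (simp add: pre_def sdrop_def)
  qed
qed

lemma bij_gT: "bij gT"
  by (rule o_bij[where g = gI]) (simp_all add: fun_eq_iff gI_gT gT_gI)

lemma pcont_gT: "pcont gT"
  unfolding pcont_def
proof (intro allI)
  fix x k
  show "\<exists>n. \<forall>y. agree n y x \<longrightarrow> agree k (gT y) (gT x)"
  proof (intro exI allI impI)
    fix y assume a: "agree (k + 2) y x"
    then have y01: "y 0 = x 0" "y 1 = x 1" unfolding agree_def by auto
    have a2: "agree k (sdrop 2 y) (sdrop 2 x)" using agree_sdrop[of 2 k y x] a by (simp add: add.commute)
    have a1: "agree (k + 1) (sdrop 1 y) (sdrop 1 x)" using agree_sdrop[of 1 "k+1" y x] a by (simp add: add.commute)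
    have a0: "agree k y x" using a agree_mono by fastforce
    show "agree k (gT y) (gT x)"
      unfolding gT_def using y01 a0 a1 a2 agree_pre[of "[False]" k y x] agree_pre[of "[False, True]" k]
      agree_mono[of "1 + k" "pre [False] y" "pre [False] x" k] agree_mono[of "2 + k" _ _ k] agree_mono[of "k+1" "sdrop 1 y" "sdrop 1 x" k]
      by auto
  qed
qed

lemma RR_gT: "RR gT"
proof (rule RR_cover)
  let ?T = "{strip gT, strip (gT \<circ> pre [True]), id}"
  show "finite ?T" by simp
  fix w
  consider "w = []" | v where "w = False # v" | "w = [True]" | u where "w = True # False # u"
    | u where "w = True # True # u"
    by (metis (full_types) list.exhaust)
  then show "strip (gT \<circ> pre w) \<in> ?T"
  proof cases
    case 1 then show ?thesis by simp
  next
    case (2 v)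
    have "gT \<circ> pre w = pre (False # False # v)"
      unfolding 2 by (rule ext) (simp add: gT_def pre_pre)
    then show ?thesis by simp
  next
    case 3 then show ?thesis by simp
  next
    case (4 u)
    have "gT \<circ> pre w = pre (False # True # u)"
      unfolding 4 by (rule ext) (simp add: gT_def pre_pre sdrop_pre_le[of 2, simplified])
    then show ?thesis by simp
  next
    case (5 u)
    have "gT \<circ> pre w = pre (True # u)"
      unfolding 5 by (rule ext) (simp add: gT_def pre_pre sdrop_pre_le[of 1, simplified])
    then show ?thesis by simp
  qed
qed

lemma RH_gT: "gT \<in> rational_homeos"
  using RH_iff bij_gT pcont_gT RR_gT by blast

lemma pcont_sdrop: "pcont (sdrop n)"
  unfolding pcont_def
proof (intro allI exI impI)
  fix x k y assume "agree (n + k) y x"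
  then show "agree k (sdrop n y) (sdrop n x)" by (rule agree_sdrop)
qed

lemma pcont_pre: "pcont (pre c)"
  unfolding pcont_def
proof (intro allI exI impI)
  fix x k y assume "agree k y x"
  then have "agree (length c + k) (pre c y) (pre c x)" using agree_pre by blast
  then show "agree k (pre c y) (pre c x)" by (rule agree_mono) simp
qed

lemma pcont_local:
  assumes "\<And>x. \<exists>n0 h. pcont h \<and> (\<forall>y. agree n0 y x \<longrightarrow> f y = h y)"
  shows "pcont f"
  unfolding pcont_def
proof (intro allI)
  fix x k
  obtain n0 h where h: "pcont h" "\<forall>y. agree n0 y x \<longrightarrow> f y = h y" using assms by blast
  obtain n1 where n1: "\<forall>y. agree n1 y x \<longrightarrow> agree k (h y) (h x)" using h(1) unfolding pcont_def by blast
  show "\<exists>n. \<forall>y. agree n y x \<longrightarrow> agree k (f y) (f x)"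
  proof (intro exI allI impI)
    fix y assume "agree (max n0 n1) y x"
    then have "agree n0 y x" "agree n1 y x" using agree_mono by fastforce+
    then show "agree k (f y) (f x)" using h(2) n1 by simp
  qed
qed

definition lz :: "cantor \<Rightarrow> nat" where "lz x = (LEAST i. x i)"

definition blk :: "nat \<Rightarrow> bool list" where "blk n = replicate n False @ [True]"

lemma sdrop2_pre [simp]: "sdrop 2 (pre [a, b] y) = y"
  using sdrop_pre[of "[a, b]" y] by (simp add: numeral_2_eq_2)

lemma blk1 [simp]: "blk (Suc 0) = [False, True]" by (simp add: blk_def)

lemma length_blk [simp]: "length (blk n) = Suc n" by (simp add: blk_def)

lemma pre_blk_lt: "i < n \<Longrightarrow> pre (blk n) y i = False"
  by (simp add: pre_def blk_def nth_append)

lemma pre_blk_n: "pre (blk n) y n = True"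
  by (simp add: pre_def blk_def nth_append)

lemma lz_blk: "lz (pre (blk n) y) = n"
  unfolding lz_def
proof (rule Least_equality)
  show "pre (blk n) y n" using pre_blk_n by simp
  fix m assume m: "pre (blk n) y m"
  show "n \<le> m"
  proof (rule ccontr)
    assume "\<not> n \<le> m" then have "m < n" by simp
    then show False using pre_blk_lt[of m n y] m by simp
  qed
qed

lemma blk_decomp:
  assumes "\<not> (\<forall>i. \<not> x i)"
  shows "x = pre (blk (lz x)) (sdrop (Suc (lz x)) x)"
proof -
  obtain j where j: "x j" using assms by blast
  have x1: "x (lz x)" unfolding lz_def using j by (rule LeastI)
  have x0: "i < lz x \<Longrightarrow> \<not> x i" for i unfolding lz_def using not_less_Least by blast
  show ?thesis
  proof (rule ext)
    fix i
    consider "i < lz x" | "i = lz x" | "lz x < i" by linarith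
    then show "x i = pre (blk (lz x)) (sdrop (Suc (lz x)) x) i"
    proof cases
      case 1 then show ?thesis using x0 pre_blk_lt by simp
    next
      case 2 then show ?thesis using x1 pre_blk_n by simp
    next
      case 3 then show ?thesis by (simp add: pre_nth_ge sdrop_def)
    qed
  qed
qed

lemma sdrop_blk: "sdrop (Suc n) (pre (blk n) y) = y"
  using sdrop_pre[of "blk n" y] by simp

lemma blk_not_zero: "\<not> (\<forall>i. \<not> pre (blk n) y i)"
  using pre_blk_n by blast

lemma pre_False_blk: "pre [False] (pre (blk n) y) = pre (blk (Suc n)) y"
  by (simp add: pre_pre blk_def)

lemma list_split_blk: "(\<exists>m. v = replicate m False) \<or> (\<exists>n u. v = blk n @ u)"
proof (induction v)
  case Nil then show ?case by simp
next
  case (Cons b v)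
  show ?case
  proof (cases b)
    case True then show ?thesis by (metis append_Cons append_Nil blk_def replicate_0)
  next
    case False
    from Cons.IH show ?thesis
    proof
      assume "\<exists>m. v = replicate m False"
      then show ?thesis using False by (metis replicate_Suc)
    next
      assume "\<exists>n u. v = blk n @ u"
      then obtain n u where "v = blk n @ u" by blast
      then have "b # v = blk (Suc n) @ u" using False by (simp add: blk_def)
      then show ?thesis by blast
    qed
  qed
qed

context
  fixes k :: "cantor \<Rightarrow> cantor"
  assumes kR: "k \<in> rational_homeos"
    and ks: "\<And>x. \<not> (x 0 \<and> \<not> x 1) \<Longrightarrow> k x = x"
begin

definition fp :: "cantor \<Rightarrow> cantor" where "fp y = sdrop 2 (k (pre [True, False] y))"

definition Am :: "cantor \<Rightarrow> cantor" where
  "Am x = (if \<forall>i. \<not> x i then x else pre (blk (lz x)) (fp (sdrop (Suc (lz x)) x)))"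

definition am :: "cantor \<Rightarrow> cantor" where
  "am x = (if x 0 then k x else Am x)"

lemma kb: "bij k" and kp: "pcont k" and kr: "RR k" using kR RH_iff by auto

lemma ki: "inj k" using kb bij_is_inj by blast

lemma K1: "k (pre [True, False] y) = pre [True, False] (fp y)"
proof -
  define z where "z = k (pre [True, False] y)"
  have z01: "z 0 \<and> \<not> z 1"
  proof (rule ccontr)
    assume "\<not> (z 0 \<and> \<not> z 1)"
    then have "k z = z" using ks by blast
    then have "z = pre [True, False] y" using ki unfolding z_def by (metis injD)
    then show False using \<open>\<not> (z 0 \<and> \<not> z 1)\<close> by (simp add: numeral_2_eq_2)
  qed
  have "z = pre [z 0, z 1] (sdrop 2 z)" using pre_head2 by simp
  then show ?thesis using z01 unfolding fp_def z_def by simp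
qed

lemma fp_inj: "inj fp"
proof (rule injI)
  fix x y assume "fp x = fp y"
  then have "k (pre [True, False] x) = k (pre [True, False] y)" using K1 by simp
  then show "x = y" using ki pre_inj by (metis injD)
qed

lemma fp_surj: "surj fp"
proof -
  have "y \<in> range fp" for y
  proof -
    obtain x where x: "k x = pre [True, False] y" using kb by (metis bij_pointE)
    have "x 0 \<and> \<not> x 1"
    proof (rule ccontr)
      assume "\<not> (x 0 \<and> \<not> x 1)"
      then have "x = pre [True, False] y" using ks x by simp
      then show False using \<open>\<not> (x 0 \<and> \<not> x 1)\<close> by (simp add: numeral_2_eq_2)
    qed
    then have "x = pre [True, False] (sdrop 2 x)" using pre_head2[of x] by simp
    then have "pre [True, False] (fp (sdrop 2 x)) = pre [True, False] y" using x K1 by metis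
    then show ?thesis using pre_inj by (metis rangeI)
  qed
  then show ?thesis by blast
qed

lemma fp_pcont: "pcont fp"
proof -
  have "fp = sdrop 2 \<circ> k \<circ> pre [True, False]" by (simp add: fun_eq_iff fp_def)
  then show ?thesis using pcont_comp pcont_sdrop pcont_pre kp by metis
qed

lemma fp_rset: "rset fp \<subseteq> rset k"
proof
  fix r assume "r \<in> rset fp"
  then obtain u where r: "r = strip (fp \<circ> pre u)" unfolding rset_def by auto
  have "k \<circ> pre (True # False # u) = pre [True, False] \<circ> (fp \<circ> pre u)"
  proof (rule ext)
    fix x
    have "pre (True # False # u) x = pre [True, False] (pre u x)" by (simp add: pre_pre)
    then show "(k \<circ> pre (True # False # u)) x = (pre [True, False] \<circ> (fp \<circ> pre u)) x" using K1 by simp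
  qed
  then have "strip (k \<circ> pre (True # False # u)) = r"
    unfolding r using strip_pre inj_nontriv inj_comp_pre[OF fp_inj] by metis
  then show "r \<in> rset k" unfolding rset_def by (metis rangeI)
qed

lemma Am_zero: "\<forall>i. \<not> x i \<Longrightarrow> Am x = x" by (simp add: Am_def)

lemma Am_blk: "Am (pre (blk n) y) = pre (blk n) (fp y)"
proof -
  have "\<not> (\<forall>i. \<not> pre (blk n) y i)" by (rule blk_not_zero)
  then have "Am (pre (blk n) y) = pre (blk (lz (pre (blk n) y))) (fp (sdrop (Suc (lz (pre (blk n) y))) (pre (blk n) y)))"
    unfolding Am_def by (rule if_not_P)
  then show ?thesis by (simp add: lz_blk sdrop_blk)
qed

lemma Am_False: "Am (pre [False] x) = pre [False] (Am x)"
proof (cases "\<forall>i. \<not> x i")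
  case True
  then have "\<forall>i. \<not> pre [False] x i" by (simp add: pre_def)
  then show ?thesis using True by (simp add: Am_zero)
next
  case False
  then have x: "x = pre (blk (lz x)) (sdrop (Suc (lz x)) x)" by (rule blk_decomp)
  show ?thesis by (subst (1 2) x) (simp add: pre_False_blk Am_blk)
qed

lemma Am_rep: "Am (pre (replicate m False) x) = pre (replicate m False) (Am x)"
proof (induction m)
  case 0 then show ?case by simp
next
  case (Suc m)
  have "pre (replicate (Suc m) False) x = pre [False] (pre (replicate m False) x)" by (simp add: pre_pre)
  moreover have "pre (replicate (Suc m) False) (Am x) = pre [False] (pre (replicate m False) (Am x))" by (simp add: pre_pre)
  ultimately show ?case using Suc Am_False by simp
qed

lemma Am_cases:
  obtains "\<forall>i. \<not> x i" "Am x = x"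
  | n y where "x = pre (blk n) y" "Am x = pre (blk n) (fp y)"
proof (cases "\<forall>i. \<not> x i")
  case True then show ?thesis using that(1) Am_zero by blast
next
  case False
  then have "x = pre (blk (lz x)) (sdrop (Suc (lz x)) x)" by (rule blk_decomp)
  then show ?thesis using that(2) Am_blk by metis
qed

lemma Am_inj: "inj Am"
proof (rule injI)
  fix x x' assume e: "Am x = Am x'"
  show "x = x'"
  proof (cases x rule: Am_cases)
    case 1
    note X = this
    show ?thesis
    proof (cases x' rule: Am_cases)
      case 1 then show ?thesis using e X by simp
    next
      case (2 n y)
      then have "Am x' n" using pre_blk_n by simp
      then show ?thesis using e X by simp
    qed
  next
    case (2 n y)
    note X = this
    show ?thesis
    proof (cases x' rule: Am_cases)
      case 1
      have "Am x n" using X pre_blk_n by simp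
      then show ?thesis using e 1 by simp
    next
      case (2 n' y')
      note X' = this
      have "n = lz (Am x)" using X lz_blk by simp
      also have "\<dots> = n'" using e X' lz_blk by simp
      finally have nn: "n = n'" .
      then have "fp y = fp y'" using e X X' pre_inj by metis
      then have "y = y'" using fp_inj by (simp add: injD)
      then show ?thesis using X X' nn by simp
    qed
  qed
qed

lemma Am_0: "\<not> x 0 \<Longrightarrow> \<not> Am x 0"
proof (cases x rule: Am_cases)
  case 1 then show "\<not> x 0 \<Longrightarrow> \<not> Am x 0" by simp
next
  case (2 n y)
  assume "\<not> x 0"
  then have "n \<noteq> 0" using 2 pre_blk_n by metis
  then show ?thesis using 2 pre_blk_lt by simp
qed

lemma Am_surj0: "\<not> z 0 \<Longrightarrow> \<exists>x. \<not> x 0 \<and> Am x = z"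
proof (cases "\<forall>i. \<not> z i")
  case True then show ?thesis using Am_zero by blast
next
  case False
  assume z0: "\<not> z 0"
  from blk_decomp[OF False] obtain n y where zy: "z = pre (blk n) y" by blast
  obtain y' where "fp y' = y" using fp_surj by (metis surjD)
  then have "Am (pre (blk n) y') = z" using zy Am_blk by simp
  moreover have "\<not> pre (blk n) y' 0" using z0 zy by (metis pre_blk_lt pre_blk_n neq0_conv)
  ultimately show ?thesis by blast
qed

lemma k1: "x 0 \<Longrightarrow> k x 0"
proof (cases "x 1")
  case True
  assume "x 0" then show ?thesis using ks True by simp
next
  case False
  assume "x 0"
  then have "x = pre [True, False] (sdrop 2 x)" using pre_head2[of x] False by simp
  then show ?thesis using K1 by (metis pre_Cons_0)
qed

lemma am_bij: "bij am"
proof -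
  have "inj am"
  proof (rule injI)
    fix x y assume e: "am x = am y"
    show "x = y"
    proof (cases "x 0"; cases "y 0")
      assume "x 0" "y 0" then show ?thesis using e ki unfolding am_def by (simp add: injD)
    next
      assume "x 0" "\<not> y 0"
      then have "am x 0" "\<not> am y 0" unfolding am_def using k1 Am_0 by auto
      then show ?thesis using e by simp
    next
      assume "\<not> x 0" "y 0"
      then have "\<not> am x 0" "am y 0" unfolding am_def using k1 Am_0 by auto
      then show ?thesis using e by simp
    next
      assume "\<not> x 0" "\<not> y 0" then show ?thesis using e Am_inj unfolding am_def by (simp add: injD)
    qed
  qed
  moreover have "surj am"
  proof -
    have "z \<in> range am" for z
    proof (cases "z 0")
      case True
      obtain x where x: "k x = z" using kb by (metis bij_pointE)
      have "x 0"
      proof (rule ccontr)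
        assume "\<not> x 0" then have "k x = x" using ks by blast
        then show False using x True \<open>\<not> x 0\<close> by simp
      qed
      then have "am x = z" using x unfolding am_def by simp
      then show ?thesis by blast
    next
      case False
      then obtain x where "\<not> x 0" "Am x = z" using Am_surj0 by blast
      then have "am x = z" unfolding am_def by simp
      then show ?thesis by blast
    qed
    then show ?thesis by blast
  qed
  ultimately show ?thesis by (simp add: bij_def)
qed

lemma Am_pcont: "pcont Am"
  unfolding pcont_def
proof (intro allI)
  fix x' kk
  show "\<exists>n. \<forall>y. agree n y x' \<longrightarrow> agree kk (Am y) (Am x')"
  proof (cases x' rule: Am_cases)
    case 1
    note X = this
    show ?thesis
    proof (intro exI allI impI)
      fix y assume a: "agree kk y x'"
      show "agree kk (Am y) (Am x')"
      proof (cases y rule: Am_cases)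
        case 1 then show ?thesis using a X by simp
      next
        case (2 n z)
        note Y = this
        have "kk \<le> n"
        proof (rule ccontr)
          assume "\<not> kk \<le> n"
          then have "y n = x' n" using a unfolding agree_def by simp
          moreover have "y n" using Y pre_blk_n by simp
          ultimately show False using X by simp
        qed
        then have "\<forall>i<kk. Am y i = False" using Y pre_blk_lt by simp
        then show ?thesis unfolding agree_def using X by simp
      qed
    qed
  next
    case (2 n z)
    note X = this
    obtain m where m: "\<forall>y. agree m y z \<longrightarrow> agree kk (fp y) (fp z)" using fp_pcont unfolding pcont_def by blast
    show ?thesis
    proof (intro exI allI impI)
      fix y assume a: "agree (Suc n + m) y x'"
      have "agree (Suc n) y x'" using a agree_mono by fastforce
      then have "stake (Suc n) y = stake (Suc n) x'" by (rule agree_stake)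
      also have "\<dots> = blk n" using X stake_pre[of "blk n" z] by simp
      finally have yy: "y = pre (blk n) (sdrop (Suc n) y)" using pre_stake_sdrop[of "Suc n" y] by simp
      have "agree m (sdrop (Suc n) y) (sdrop (Suc n) x')" using agree_sdrop[OF a] .
      then have "agree m (sdrop (Suc n) y) z" using X sdrop_blk by simp
      then have "agree kk (fp (sdrop (Suc n) y)) (fp z)" using m by blast
      then have "agree (Suc n + kk) (pre (blk n) (fp (sdrop (Suc n) y))) (pre (blk n) (fp z))"
        using agree_pre[of "blk n"] by simp
      then have "agree (Suc n + kk) (Am y) (Am x')" using X yy Am_blk by metis
      then show "agree kk (Am y) (Am x')" by (rule agree_mono) simp
    qed
  qed
qed

lemma am_pcont: "pcont am"
proof (rule pcont_local)
  fix x
  show "\<exists>n0 h. pcont h \<and> (\<forall>y. agree n0 y x \<longrightarrow> am y = h y)"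
  proof (cases "x 0")
    case True
    show ?thesis
    proof (intro exI conjI allI impI)
      show "pcont k" by (rule kp)
      fix y assume "agree 1 y x" then have "y 0" using True unfolding agree_def by simp
      then show "am y = k y" unfolding am_def by simp
    qed
  next
    case False
    show ?thesis
    proof (intro exI conjI allI impI)
      show "pcont Am" by (rule Am_pcont)
      fix y assume "agree 1 y x" then have "\<not> y 0" using False unfolding agree_def by simp
      then show "am y = Am y" unfolding am_def by simp
    qed
  qed
qed

lemma Am_rset: "strip (Am \<circ> pre v) \<in> insert (strip Am) (rset k)"
proof -
  have iA: "inj Am" by (rule Am_inj)
  from list_split_blk[of v] show ?thesis
  proof
    assume "\<exists>m. v = replicate m False"
    then obtain m where v: "v = replicate m False" by blast
    have "Am \<circ> pre v = pre v \<circ> Am" unfolding v by (rule ext) (simp add: Am_rep)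
    then have "strip (Am \<circ> pre v) = strip Am" using strip_pre inj_nontriv[OF iA] by metis
    then show ?thesis by simp
  next
    assume "\<exists>n u. v = blk n @ u"
    then obtain n u where v: "v = blk n @ u" by blast
    have "Am \<circ> pre v = pre (blk n) \<circ> (fp \<circ> pre u)"
    proof (rule ext)
      fix y
      have "pre v y = pre (blk n) (pre u y)" unfolding v by (simp add: pre_pre)
      then show "(Am \<circ> pre v) y = (pre (blk n) \<circ> (fp \<circ> pre u)) y" by (simp add: Am_blk)
    qed
    then have "strip (Am \<circ> pre v) = strip (fp \<circ> pre u)"
      using strip_pre inj_nontriv inj_comp_pre[OF fp_inj] by metis
    moreover have "strip (fp \<circ> pre u) \<in> rset k" using fp_rset unfolding rset_def by blast
    ultimately show ?thesis by simp
  qed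
qed

lemma am_RR: "RR am"
proof (rule RR_cover)
  show "finite (insert (strip am) (insert (strip Am) (rset k)))" using kr unfolding RR_def by simp
  fix w
  consider "w = []" | v where "w = True # v" | v where "w = False # v"
    by (metis (full_types) list.exhaust)
  then show "strip (am \<circ> pre w) \<in> insert (strip am) (insert (strip Am) (rset k))"
  proof cases
    case 1 then show ?thesis by simp
  next
    case (2 v)
    have "am \<circ> pre w = k \<circ> pre w" unfolding 2 by (rule ext) (simp add: am_def)
    then show ?thesis unfolding rset_def by simp
  next
    case (3 v)
    have "am \<circ> pre w = pre [False] \<circ> (Am \<circ> pre v)"
    proof (rule ext)
      fix y
      have "pre w y = pre [False] (pre v y)" unfolding 3 by (simp add: pre_pre)
      then show "(am \<circ> pre w) y = (pre [False] \<circ> (Am \<circ> pre v)) y" by (simp add: am_def Am_False)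
    qed
    then have "strip (am \<circ> pre w) = strip (Am \<circ> pre v)"
      using strip_pre inj_nontriv inj_comp_pre[OF Am_inj] by metis
    then show ?thesis using Am_rset by simp
  qed
qed

lemma am_RH: "am \<in> rational_homeos"
  using RH_iff am_bij am_pcont am_RR by blast

lemma am_comm: "am \<circ> gT = k \<circ> gT \<circ> am"
proof (rule ext)
  fix x
  show "(am \<circ> gT) x = (k \<circ> gT \<circ> am) x"
  proof (cases "x 0")
    case False
    have "gT x = pre [False] x" using False unfolding gT_def by simp
    then have l: "am (gT x) = pre [False] (Am x)" unfolding am_def by (simp add: Am_False)
    have "\<not> Am x 0" using Am_0 False by blast
    then have "gT (am x) = pre [False] (Am x)" using False unfolding am_def gT_def by simp
    moreover have "k (pre [False] (Am x)) = pre [False] (Am x)" using ks by simp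
    ultimately show ?thesis using l by simp
  next
    case True
    show ?thesis
    proof (cases "x 1")
      case False
      define y where "y = sdrop 2 x"
      have x: "x = pre [True, False] y" unfolding y_def using pre_head2[of x] True False by simp
      have "gT x = pre (blk 1) y" unfolding x gT_def blk1 by simp
      moreover have "\<not> pre (blk 1) y 0" using pre_blk_lt[of 0 1] by simp
      ultimately have l: "am (gT x) = pre [False, True] (fp y)" unfolding am_def using Am_blk[of "Suc 0" y] by simp
      have "am x = pre [True, False] (fp y)" unfolding am_def using True x K1 by simp
      then have "gT (am x) = pre [False, True] (fp y)" unfolding gT_def by simp
      moreover have "k (pre [False, True] (fp y)) = pre [False, True] (fp y)" using ks by simp
      ultimately show ?thesis using l by simp
    next
      case T1: True
      have kx: "k x = x" using ks True T1 by simp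
      have "gT x = sdrop 1 x" using True T1 unfolding gT_def by simp
      moreover have "sdrop 1 x 0" using T1 by (simp add: sdrop_def)
      ultimately have l: "am (gT x) = k (sdrop 1 x)" unfolding am_def by simp
      have "am x = x" using True kx unfolding am_def by simp
      then have "gT (am x) = sdrop 1 x" using True T1 unfolding gT_def by simp
      then show ?thesis using l by simp
    qed
  qed
qed

end

lemma gI_eq: "inv_into UNIV gT = gI"
proof (rule ext)
  fix z show "inv_into UNIV gT z = gI z"
    by (rule inv_into_f_eq) (simp_all add: bij_is_inj[OF bij_gT] gT_gI)
qed

lemma RH_gI: "gI \<in> rational_homeos"
  using RH_inv[OF RH_gT] gI_eq by simp

lemma G1: "z 0 \<Longrightarrow> gI z 0 \<and> gI z 1"
  unfolding gI_def by simp

lemma G2: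
  assumes "\<not> (\<forall>i<Suc (Suc j). \<not> z i)"
  shows "\<not> (\<forall>i<Suc j. \<not> gI z i)"
proof
  assume a: "\<forall>i<Suc j. \<not> gI z i"
  then have "\<not> gI z 0" by simp
  then have "z = pre [False] (gI z)" using gT_gI[of z] unfolding gT_def by simp
  then have "\<forall>i<Suc (Suc j). \<not> z i" using a by (metis less_Suc_eq_0_disj pre_single_0 pre_single_Suc)
  then show False using assms by simp
qed

lemma G3: "\<not> (\<forall>i<Suc j. \<not> z i) \<Longrightarrow> (gI ^^ j) z 0"
proof (induction j arbitrary: z)
  case 0 then show ?case by simp
next
  case (Suc j)
  have "\<not> (\<forall>i<Suc j. \<not> gI z i)" using G2 Suc.prems .
  then have "(gI ^^ j) (gI z) 0" using Suc.IH by blast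
  then show ?case by (simp only: funpow_Suc_right comp_apply)
qed

theorem lemma2p7:
  assumes "f \<in> rational_homeos" and "small_support f"
  shows "f \<in> derived RG (carrier RG)"
proof -
  obtain E where E: "clopen_cantor E" "E \<noteq> UNIV" "\<And>x. x \<notin> E \<Longrightarrow> f x = x"
    using assms(2) unfolding small_support_def by blast
  obtain x0 where x0: "x0 \<notin> E" using E(2) by blast
  have "openin cantor_top (UNIV - E)" using E(1) unfolding clopen_cantor_def closedin_def by simp
  then obtain n where n: "{y. agree n y x0} \<subseteq> UNIV - E" using open_has_cyl x0 by blast
  define u where "u = stake (Suc n) x0"
  have uE: "y \<in> E \<Longrightarrow> \<not> (\<forall>i<Suc n. \<not> msk u y i)" for y
  proof
    assume yE: "y \<in> E" and a: "\<forall>i<Suc n. \<not> msk u y i"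
    have "agree n y x0" unfolding agree_def
    proof (intro allI impI)
      fix i assume "i < n"
      then have "\<not> msk u y i" using a by simp
      then show "y i = x0 i" using \<open>i < n\<close> unfolding msk_def u_def by simp
    qed
    then show False using n yE by blast
  qed
  define phi where "phi = msk [False, True] \<circ> (gI ^^ Suc n) \<circ> msk u"
  have phiE: "y \<in> E \<Longrightarrow> phi y 0 \<and> \<not> phi y 1" for y
  proof -
    assume "y \<in> E"
    then have "(gI ^^ n) (msk u y) 0" using G3 uE by blast
    then have "gI ((gI ^^ n) (msk u y)) 0 \<and> gI ((gI ^^ n) (msk u y)) 1" by (rule G1)
    then show ?thesis unfolding phi_def by (simp add: msk_def)
  qed
  have phiR: "phi \<in> rational_homeos"
    unfolding phi_def by (intro RH_comp RH_msk RH_pow RH_gI)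
  define psi where "psi = inv_into UNIV phi"
  have psiR: "psi \<in> rational_homeos" unfolding psi_def using RH_inv[OF phiR] .
  have phib: "bij phi" using phiR RH_iff by blast
  have phipsi: "phi (psi x) = x" for x unfolding psi_def using phib by (simp add: bij_is_surj surj_f_inv_f)
  have psiphi: "psi (phi x) = x" for x unfolding psi_def using phib by (simp add: bij_is_inj inv_f_f)
  define k where "k = phi \<circ> f \<circ> psi"
  have kR: "k \<in> rational_homeos" unfolding k_def using phiR assms(1) psiR by (intro RH_comp)
  have ks: "k x = x" if "\<not> (x 0 \<and> \<not> x 1)" for x
  proof -
    have "psi x \<notin> E"
    proof
      assume "psi x \<in> E"
      then have "phi (psi x) 0 \<and> \<not> phi (psi x) 1" by (rule phiE)
      then show False using that phipsi by simp
    qed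
    then have "f (psi x) = psi x" using E(3) by blast
    then show ?thesis unfolding k_def using phipsi by simp
  qed
  define A where "A = am k"
  have AR: "A \<in> rational_homeos" unfolding A_def using am_RH kR ks by blast
  have comm: "A \<circ> gT = k \<circ> gT \<circ> A" unfolding A_def using am_comm kR ks by blast
  define h1 where "h1 = psi \<circ> A \<circ> phi"
  define h2 where "h2 = psi \<circ> gT \<circ> phi"
  have h1R: "h1 \<in> rational_homeos" unfolding h1_def using psiR AR phiR by (intro RH_comp)
  have h2R: "h2 \<in> rational_homeos" unfolding h2_def using psiR RH_gT phiR by (intro RH_comp)
  have key: "h1 (h2 y) = f (h2 (h1 y))" for y
  proof -
    have "h1 (h2 y) = psi (A (gT (phi y)))" unfolding h1_def h2_def by (simp add: phipsi)
    also have "\<dots> = psi (k (gT (A (phi y))))" using comm by (metis comp_apply)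
    also have "\<dots> = f (psi (gT (A (phi y))))" unfolding k_def by (simp add: psiphi)
    also have "\<dots> = f (h2 (h1 y))" unfolding h1_def h2_def by (simp add: phipsi)
    finally show ?thesis .
  qed
  have h1b: "bij h1" and h2b: "bij h2" using h1R h2R RH_iff by auto
  have "h1 \<circ> h2 \<circ> inv_into UNIV h1 \<circ> inv_into UNIV h2 = f"
  proof (rule ext)
    fix x
    have "h1 (h2 (inv_into UNIV h1 (inv_into UNIV h2 x))) = f (h2 (h1 (inv_into UNIV h1 (inv_into UNIV h2 x))))"
      by (rule key)
    also have "\<dots> = f x" using h1b h2b by (simp add: bij_is_surj surj_f_inv_f)
    finally show "(h1 \<circ> h2 \<circ> inv_into UNIV h1 \<circ> inv_into UNIV h2) x = f x" by simp
  qed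
  then show ?thesis using commutator_in[OF h1R h2R] by simp
qed

end
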